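(* (a) If $G\in\mathcal U$ has at least one support vertex $s$, then the graph $G'$ obtained from $G$ by adding a new vertex $w$ and the edge $sw$ is also in $\mathcal U$. (b) If $G\in\mathcal U$ has a strong support vertex $s$ and $w$ is a leaf adjacent to $s$, then $G-w\in\mathcal U$.
   Context: All graphs are finite and simple. A set $P\subseteq V(G)$ is an open packing if no two distinct vertices of $P$ have a common neighbor; it is maximal if maximal under inclusion among open packings. $\rho^o(G)$ is the maximum size of an open packing and $\rho^o_L(G)$ the minimum size of a maximal open packing; $\mathcal U$ is the class of graphs with $\rho^o_L(G)=\rho^o(G)$. A leaf is a vertex of degree $1$, a support vertex is a vertex adjacent to at least one leaf, and a strong support vertex is one adjacent to at least two leaves. *)

theory Defs
  imports Main
begin

definition graph :: "'a set \<Rightarrow> ('a \<Rightarrow> 'a \<Rightarrow> bool) \<Rightarrow> bool" where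
  "graph V E \<longleftrightarrow> finite V \<and> (\<forall>x y. E x y \<longrightarrow> x \<in> V \<and> y \<in> V)
     \<and> (\<forall>x y. E x y \<longrightarrow> E y x) \<and> (\<forall>x. \<not> E x x)"

definition nbhd :: "'a set \<Rightarrow> ('a \<Rightarrow> 'a \<Rightarrow> bool) \<Rightarrow> 'a \<Rightarrow> 'a set" where
  "nbhd V E v = {u \<in> V. E v u}"

definition degree :: "'a set \<Rightarrow> ('a \<Rightarrow> 'a \<Rightarrow> bool) \<Rightarrow> 'a \<Rightarrow> nat" where
  "degree V E v = card (nbhd V E v)"

definition leaf :: "'a set \<Rightarrow> ('a \<Rightarrow> 'a \<Rightarrow> bool) \<Rightarrow> 'a \<Rightarrow> bool" where
  "leaf V E v \<longleftrightarrow> v \<in> V \<and> degree V E v = 1"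

definition support_vertex :: "'a set \<Rightarrow> ('a \<Rightarrow> 'a \<Rightarrow> bool) \<Rightarrow> 'a \<Rightarrow> bool" where
  "support_vertex V E s \<longleftrightarrow> s \<in> V \<and> (\<exists>l \<in> V. E s l \<and> leaf V E l)"

definition strong_support_vertex :: "'a set \<Rightarrow> ('a \<Rightarrow> 'a \<Rightarrow> bool) \<Rightarrow> 'a \<Rightarrow> bool" where
  "strong_support_vertex V E s \<longleftrightarrow> s \<in> V \<and>
     (\<exists>l1 \<in> V. \<exists>l2 \<in> V. l1 \<noteq> l2 \<and> E s l1 \<and> E s l2 \<and> leaf V E l1 \<and> leaf V E l2)"

definition open_packing :: "'a set \<Rightarrow> ('a \<Rightarrow> 'a \<Rightarrow> bool) \<Rightarrow> 'a set \<Rightarrow> bool" where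
  "open_packing V E P \<longleftrightarrow> P \<subseteq> V \<and>
     (\<forall>x \<in> P. \<forall>y \<in> P. x \<noteq> y \<longrightarrow> nbhd V E x \<inter> nbhd V E y = {})"

definition maximal_open_packing :: "'a set \<Rightarrow> ('a \<Rightarrow> 'a \<Rightarrow> bool) \<Rightarrow> 'a set \<Rightarrow> bool" where
  "maximal_open_packing V E P \<longleftrightarrow> open_packing V E P \<and>
     (\<forall>Q. open_packing V E Q \<and> P \<subseteq> Q \<longrightarrow> Q = P)"

definition open_packing_number :: "'a set \<Rightarrow> ('a \<Rightarrow> 'a \<Rightarrow> bool) \<Rightarrow> nat" where
  "open_packing_number V E = Max (card ` {P. open_packing V E P})"

definition lower_open_packing_number :: "'a set \<Rightarrow> ('a \<Rightarrow> 'a \<Rightarrow> bool) \<Rightarrow> nat" where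
  "lower_open_packing_number V E = Min (card ` {P. maximal_open_packing V E P})"

definition in_U :: "'a set \<Rightarrow> ('a \<Rightarrow> 'a \<Rightarrow> bool) \<Rightarrow> bool" where
  "in_U V E \<longleftrightarrow> graph V E \<and> lower_open_packing_number V E = open_packing_number V E"

definition add_pendant :: "('a \<Rightarrow> 'a \<Rightarrow> bool) \<Rightarrow> 'a \<Rightarrow> 'a \<Rightarrow> ('a \<Rightarrow> 'a \<Rightarrow> bool)" where
  "add_pendant E s w = (\<lambda>x y. E x y \<or> (x = s \<and> y = w) \<or> (x = w \<and> y = s))"

definition del_vertex_rel :: "('a \<Rightarrow> 'a \<Rightarrow> bool) \<Rightarrow> 'a \<Rightarrow> ('a \<Rightarrow> 'a \<Rightarrow> bool)" where
  "del_vertex_rel E w = (\<lambda>x y. E x y \<and> x \<noteq> w \<and> y \<noteq> w)"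

end

theory Submission
  imports Defs
begin

lemma leaf_nbhd:
  assumes g: "graph V E" and lf: "leaf V E l" and e: "E s l"
  shows "nbhd V E l = {s}"
proof -
  have c: "card (nbhd V E l) = 1" using lf by (simp add: leaf_def degree_def)
  have "s \<in> nbhd V E l" using g e unfolding graph_def nbhd_def by blast
  with c show ?thesis by (metis card_1_singletonE singletonD)
qed

lemma aut_nbhd:
  assumes inv: "\<forall>x. \<sigma> (\<sigma> x) = x" and VV: "\<forall>x. \<sigma> x \<in> V \<longleftrightarrow> x \<in> V"
    and EE: "\<forall>x y. E (\<sigma> x) (\<sigma> y) = E x y"
  shows "nbhd V E (\<sigma> x) = \<sigma> ` nbhd V E x"
proof
  show "nbhd V E (\<sigma> x) \<subseteq> \<sigma> ` nbhd V E x"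
  proof
    fix u assume "u \<in> nbhd V E (\<sigma> x)"
    then have "u \<in> V" "E (\<sigma> x) u" by (auto simp: nbhd_def)
    then have "\<sigma> u \<in> nbhd V E x" using inv VV EE unfolding nbhd_def by (metis mem_Collect_eq)
    then show "u \<in> \<sigma> ` nbhd V E x" using inv by (metis image_eqI)
  qed
  show "\<sigma> ` nbhd V E x \<subseteq> nbhd V E (\<sigma> x)"
    using inv VV EE unfolding nbhd_def by auto
qed

lemma aut_op:
  assumes inv: "\<forall>x. \<sigma> (\<sigma> x) = x" and VV: "\<forall>x. \<sigma> x \<in> V \<longleftrightarrow> x \<in> V"
    and EE: "\<forall>x y. E (\<sigma> x) (\<sigma> y) = E x y" and op: "open_packing V E P"
  shows "open_packing V E (\<sigma> ` P)"
proof -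
  have inj: "inj \<sigma>" using inv by (metis injI)
  have "\<sigma> ` P \<subseteq> V" using op VV unfolding open_packing_def by auto
  moreover have "\<forall>x\<in>\<sigma> ` P. \<forall>y\<in>\<sigma> ` P. x \<noteq> y \<longrightarrow> nbhd V E x \<inter> nbhd V E y = {}"
  proof (intro ballI impI)
    fix x y assume "x \<in> \<sigma> ` P" "y \<in> \<sigma> ` P" "x \<noteq> y"
    then obtain a b where ab: "a \<in> P" "b \<in> P" "x = \<sigma> a" "y = \<sigma> b" "a \<noteq> b" by auto
    have "nbhd V E x \<inter> nbhd V E y = \<sigma> ` (nbhd V E a \<inter> nbhd V E b)"
      using ab aut_nbhd[OF inv VV EE] image_Int[OF inj] by simp
    also have "\<dots> = {}" using op ab unfolding open_packing_def by auto
    finally show "nbhd V E x \<inter> nbhd V E y = {}" .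
  qed
  ultimately show ?thesis unfolding open_packing_def by blast
qed

lemma aut_max:
  assumes inv: "\<forall>x. \<sigma> (\<sigma> x) = x" and VV: "\<forall>x. \<sigma> x \<in> V \<longleftrightarrow> x \<in> V"
    and EE: "\<forall>x y. E (\<sigma> x) (\<sigma> y) = E x y" and m: "maximal_open_packing V E P"
  shows "maximal_open_packing V E (\<sigma> ` P)"
proof -
  have ii: "\<sigma> ` \<sigma> ` A = A" for A using inv by (simp add: image_comp comp_def)
  have "open_packing V E (\<sigma> ` P)" using aut_op[OF inv VV EE] m
    unfolding maximal_open_packing_def by blast
  moreover have "Q = \<sigma> ` P" if "open_packing V E Q" "\<sigma> ` P \<subseteq> Q" for Q
  proof -
    have "open_packing V E (\<sigma> ` Q)" using aut_op[OF inv VV EE that(1)] .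
    moreover have "P \<subseteq> \<sigma> ` Q" using that(2) ii by (metis image_mono)
    ultimately have "\<sigma> ` Q = P" using m unfolding maximal_open_packing_def by blast
    then show ?thesis using ii by metis
  qed
  ultimately show ?thesis unfolding maximal_open_packing_def by blast
qed

locale pend =
  fixes V :: "'a set" and E :: "'a \<Rightarrow> 'a \<Rightarrow> bool" and s l w :: 'a
  assumes g: "graph V E" and lf: "leaf V E l" and esl: "E s l" and wV: "w \<notin> V"
begin

definition V' where "V' = insert w V"
definition E' where "E' = add_pendant E s w"
definition \<sigma> where "\<sigma> x = (if x = w then l else if x = l then w else x)"

lemma sV: "s \<in> V" and lV: "l \<in> V" and ls: "l \<noteq> s" and sw: "s \<noteq> w" and lw: "l \<noteq> w"
  using g esl wV unfolding graph_def by metis+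

lemma Nl: "nbhd V E l = {s}" using leaf_nbhd[OF g lf esl] .

lemma El: "E l y \<longleftrightarrow> y = s"
  using Nl g esl unfolding nbhd_def graph_def by blast

lemma E'_char: "E' x y \<longleftrightarrow> (E x y \<and> x \<noteq> w \<and> y \<noteq> w) \<or> (x = s \<and> y = w) \<or> (x = w \<and> y = s)"
  using g wV unfolding E'_def add_pendant_def graph_def by blast

lemma nb': "x \<noteq> w \<Longrightarrow> nbhd V' E' x = nbhd V E x \<union> (if x = s then {w} else {})"
  using g wV unfolding nbhd_def V'_def E'_char graph_def by auto

lemma nbw: "nbhd V' E' w = {s}"
  using sV sw unfolding nbhd_def V'_def E'_char by auto

lemma nbl: "nbhd V' E' l = {s}"
  using nb'[OF lw] Nl ls by simp

lemma inv: "\<forall>x. \<sigma> (\<sigma> x) = x" unfolding \<sigma>_def by auto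
lemma VV: "\<forall>x. \<sigma> x \<in> V' \<longleftrightarrow> x \<in> V'" using lV unfolding \<sigma>_def V'_def by auto
lemma EE: "\<forall>x y. E' (\<sigma> x) (\<sigma> y) = E' x y"
proof (intro allI)
  fix x y
  have sym: "E a b \<Longrightarrow> E b a" for a b using g unfolding graph_def by blast
  have Els: "E y l \<longleftrightarrow> y = s" for y using El sym by blast
  have Ew: "\<not> E w y" "\<not> E y w" for y using g wV unfolding graph_def by blast+
  show "E' (\<sigma> x) (\<sigma> y) = E' x y"
    unfolding E'_char \<sigma>_def using El Els Ew ls sw lw
    by (auto split: if_splits)
qed

lemma op_sub: "P \<subseteq> V \<Longrightarrow> open_packing V' E' P \<longleftrightarrow> open_packing V E P"
proof -
  assume PV: "P \<subseteq> V"
  have NV: "nbhd V E x \<subseteq> V" for x unfolding nbhd_def by auto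
  have "nbhd V' E' x \<inter> nbhd V' E' y = nbhd V E x \<inter> nbhd V E y"
    if "x \<in> P" "y \<in> P" "x \<noteq> y" for x y
  proof -
    have "x \<noteq> w" "y \<noteq> w" using that PV wV by auto
    then show ?thesis using nb' NV[of x] NV[of y] wV that(3) by auto
  qed
  note eq = this
  show ?thesis
  proof
    assume "open_packing V' E' P" then show "open_packing V E P"
      using PV eq unfolding open_packing_def by (metis (no_types, lifting))
  next
    assume "open_packing V E P" then show "open_packing V' E' P"
      using PV eq unfolding open_packing_def V'_def by (metis (no_types, lifting) subset_insertI2)
  qed
qed

lemma op_w: "open_packing V' E' P \<Longrightarrow> w \<in> P \<Longrightarrow> l \<notin> P"
  using nbw nbl lw unfolding open_packing_def by fastforce

lemma op_V: "open_packing V' E' P \<Longrightarrow> w \<notin> P \<Longrightarrow> P \<subseteq> V"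
  unfolding open_packing_def V'_def by auto

lemma inj\<sigma>: "inj \<sigma>" using inv by (metis injI)

lemma w_sigma: "open_packing V' E' P \<Longrightarrow> w \<in> P \<Longrightarrow> w \<notin> \<sigma> ` P"
  using op_w unfolding \<sigma>_def by (auto split: if_splits)

lemma max_sub:
  assumes PV: "P \<subseteq> V" and op: "open_packing V E P"
  shows "maximal_open_packing V' E' P \<longleftrightarrow> maximal_open_packing V E P"
proof
  assume m: "maximal_open_packing V' E' P"
  show "maximal_open_packing V E P" unfolding maximal_open_packing_def
  proof (intro conjI allI impI)
    show "open_packing V E P" by fact
    fix Q assume "open_packing V E Q \<and> P \<subseteq> Q"
    then have "open_packing V' E' Q" "P \<subseteq> Q" using op_sub[of Q] unfolding open_packing_def by auto
    then show "Q = P" using m unfolding maximal_open_packing_def by blast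
  qed
next
  assume m: "maximal_open_packing V E P"
  show "maximal_open_packing V' E' P" unfolding maximal_open_packing_def
  proof (intro conjI allI impI)
    show "open_packing V' E' P" using op_sub[OF PV] op by simp
    fix Q assume q: "open_packing V' E' Q \<and> P \<subseteq> Q"
    show "Q = P"
    proof (cases "w \<in> Q")
      case False
      then have "Q \<subseteq> V" using op_V q by blast
      then have "open_packing V E Q" using op_sub q by blast
      then show ?thesis using m q unfolding maximal_open_packing_def by blast
    next
      case True
      have lQ: "l \<notin> Q" using op_w q True by blast
      then have lP: "l \<notin> P" using q by blast
      have wP: "w \<notin> P" using PV wV by blast
      have sP: "\<sigma> ` P = P" using lP wP unfolding \<sigma>_def by (auto intro!: image_cong[of P P \<sigma> id, simplified])
      have o2: "open_packing V' E' (\<sigma> ` Q)" using aut_op[OF inv VV EE] q by blast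
      have w2: "w \<notin> \<sigma> ` Q" using w_sigma q True by blast
      have "\<sigma> ` Q \<subseteq> V" using op_V o2 w2 by blast
      then have "open_packing V E (\<sigma> ` Q)" using op_sub o2 by blast
      moreover have "P \<subseteq> \<sigma> ` Q" using q sP by (metis image_mono)
      ultimately have "\<sigma> ` Q = P" using m unfolding maximal_open_packing_def by blast
      moreover have "l \<in> \<sigma> ` Q" using True unfolding \<sigma>_def by force
      ultimately show ?thesis using lP by blast
    qed
  qed
qed

lemma cards_op: "card ` {P. open_packing V' E' P} = card ` {P. open_packing V E P}"
proof
  show "card ` {P. open_packing V' E' P} \<subseteq> card ` {P. open_packing V E P}"
  proof
    fix n assume "n \<in> card ` {P. open_packing V' E' P}"
    then obtain P where P: "open_packing V' E' P" "n = card P" by auto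
    define Q where "Q = (if w \<in> P then \<sigma> ` P else P)"
    have oQ: "open_packing V' E' Q" using P aut_op[OF inv VV EE] unfolding Q_def by auto
    moreover have "w \<notin> Q" using w_sigma P unfolding Q_def by auto
    ultimately have QV: "Q \<subseteq> V" by (rule op_V)
    have "open_packing V E Q" using op_sub[OF QV] oQ by simp
    moreover have "card Q = n" using P card_image[OF inj_on_subset[OF inj\<sigma> subset_UNIV, of P]] unfolding Q_def
      by simp
    ultimately show "n \<in> card ` {P. open_packing V E P}" by blast
  qed
  show "card ` {P. open_packing V E P} \<subseteq> card ` {P. open_packing V' E' P}"
  proof
    fix n assume "n \<in> card ` {P. open_packing V E P}"
    then obtain P where P: "open_packing V E P" "n = card P" by auto
    then have PV: "P \<subseteq> V" unfolding open_packing_def by blast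
    have "open_packing V' E' P" using op_sub[OF PV] P(1) by simp
    then show "n \<in> card ` {P. open_packing V' E' P}" using P(2) by blast
  qed
qed

lemma cards_max: "card ` {P. maximal_open_packing V' E' P} = card ` {P. maximal_open_packing V E P}"
proof
  show "card ` {P. maximal_open_packing V' E' P} \<subseteq> card ` {P. maximal_open_packing V E P}"
  proof
    fix n assume "n \<in> card ` {P. maximal_open_packing V' E' P}"
    then obtain P where P: "maximal_open_packing V' E' P" "n = card P" by auto
    have Pop: "open_packing V' E' P" using P unfolding maximal_open_packing_def by blast
    define Q where "Q = (if w \<in> P then \<sigma> ` P else P)"
    have mQ: "maximal_open_packing V' E' Q" using P aut_max[OF inv VV EE] unfolding Q_def by auto
    then have oQ: "open_packing V' E' Q" unfolding maximal_open_packing_def by blast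
    have "w \<notin> Q" using w_sigma Pop unfolding Q_def by auto
    then have QV: "Q \<subseteq> V" using op_V[OF oQ] by blast
    then have oQ2: "open_packing V E Q" using op_sub[OF QV] oQ by simp
    then have "maximal_open_packing V E Q" using max_sub[OF QV oQ2] mQ by simp
    moreover have "card Q = n" using P card_image[OF inj_on_subset[OF inj\<sigma> subset_UNIV, of P]] unfolding Q_def
      by simp
    ultimately show "n \<in> card ` {P. maximal_open_packing V E P}" by blast
  qed
  show "card ` {P. maximal_open_packing V E P} \<subseteq> card ` {P. maximal_open_packing V' E' P}"
  proof
    fix n assume "n \<in> card ` {P. maximal_open_packing V E P}"
    then obtain P where P: "maximal_open_packing V E P" "n = card P" by auto
    then have op: "open_packing V E P" unfolding maximal_open_packing_def by blast
    then have PV: "P \<subseteq> V" unfolding open_packing_def by blast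
    have "maximal_open_packing V' E' P" using max_sub[OF PV op] P(1) by simp
    then show "n \<in> card ` {P. maximal_open_packing V' E' P}" using P(2) by blast
  qed
qed

lemma graph': "graph V' E'"
  using g sV sw unfolding graph_def V'_def E'_char by auto

lemma numbers:
  "open_packing_number V' E' = open_packing_number V E"
  "lower_open_packing_number V' E' = lower_open_packing_number V E"
  unfolding open_packing_number_def lower_open_packing_number_def cards_op cards_max by simp_all

end

theorem mainTheorem3:
  fixes V :: "'a set" and E :: "'a \<Rightarrow> 'a \<Rightarrow> bool"
  shows "(\<forall>s w. in_U V E \<and> support_vertex V E s \<and> w \<notin> V
            \<longrightarrow> in_U (insert w V) (add_pendant E s w))
       \<and> (\<forall>s w. in_U V E \<and> strong_support_vertex V E s \<and> E s w \<and> leaf V E w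
            \<longrightarrow> in_U (V - {w}) (del_vertex_rel E w))"
proof (intro conjI allI impI)
  fix s w assume a: "in_U V E \<and> support_vertex V E s \<and> w \<notin> V"
  then obtain l where "l \<in> V" "E s l" "leaf V E l" "graph V E"
    unfolding support_vertex_def in_U_def by blast
  then interpret p: pend V E s l w using a by unfold_locales auto
  show "in_U (insert w V) (add_pendant E s w)"
    using p.graph' p.numbers a unfolding in_U_def p.V'_def p.E'_def by simp
next
  fix s w assume a: "in_U V E \<and> strong_support_vertex V E s \<and> E s w \<and> leaf V E w"
  have g: "graph V E" using a unfolding in_U_def by blast
  obtain l where l: "l \<in> V" "E s l" "leaf V E l" "l \<noteq> w"
    using a unfolding strong_support_vertex_def by metis
  have sym: "E x y \<Longrightarrow> E y x" for x y using g unfolding graph_def by blast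
  have wV: "w \<in> V" using a unfolding leaf_def by blast
  have sw: "s \<noteq> w" using g a unfolding graph_def by blast
  have Nw: "nbhd V E w = {s}" using leaf_nbhd[OF g] a by blast
  have Ew: "E w y \<longleftrightarrow> y = s" for y using Nw g a unfolding nbhd_def graph_def by blast
  have Nl: "nbhd V E l = {s}" using leaf_nbhd[OF g] l by blast
  define H where "H = del_vertex_rel E w"
  have gH: "graph (V - {w}) H" using g unfolding graph_def H_def del_vertex_rel_def by auto
  have NlH: "nbhd (V - {w}) H l = {s}"
    using Nl sw l unfolding nbhd_def H_def del_vertex_rel_def by auto
  have lfH: "leaf (V - {w}) H l" using NlH l unfolding leaf_def degree_def by auto
  have eH: "H s l" using l sw unfolding H_def del_vertex_rel_def by auto
  interpret p: pend "V - {w}" H s l w using gH lfH eH by unfold_locales auto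
  have VV: "p.V' = V" using wV unfolding p.V'_def by auto
  have EE: "p.E' = E"
    unfolding p.E'_def[abs_def] unfolding add_pendant_def H_def del_vertex_rel_def
    using Ew sym by (auto intro!: ext)
  show "in_U (V - {w}) (del_vertex_rel E w)"
  proof -
    note n = p.numbers[unfolded VV EE]
    show ?thesis using gH n a unfolding in_U_def H_def by simp
  qed
qed

end
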